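(* For every integer $n>1$, more than half of the matrices in $(\mathbb F_2)^{n\times n}$ have a $1$-dimensional null space.
   Context: $(\mathbb F_2)^{n\times n}$ is the set of all $n\times n$ matrices over $\mathbb F_2$. *)

theory Defs
  imports "HOL-Analysis.Analysis" "HOL-Library.Z2"
begin

instance bit :: finite
proof
  have "(UNIV :: bit set) = {0, 1}"
    by auto
  then show "finite (UNIV :: bit set)" by (metis finite.emptyI finite.insertI)
qed

definition null_space :: "'a::field ^ 'n ^ 'm \<Rightarrow> ('a ^ 'n) set" where
  "null_space A = {x. A *v x = 0}"

definition nullity :: "'a::field ^ 'n ^ 'm \<Rightarrow> nat" where
  "nullity A = vec.dim (null_space A)"

end

theory Submission
  imports Defs
begin


lemma card_hom_surj:
  fixes \<phi> :: "'a::{finite,ab_group_add} \<Rightarrow> 'b::{finite,ab_group_add}"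
  assumes add: "\<And>a b. \<phi> (a + b) = \<phi> a + \<phi> b" and su: "surj \<phi>"
  shows "CARD('a) = CARD('b) * card {v. \<phi> v = 0}"
proof -
  have diff: "\<phi> (a - b) = \<phi> a - \<phi> b" for a b
    by (metis add diff_add_cancel eq_diff_eq)
  obtain s where s: "\<And>w. \<phi> (s w) = w" using su by (metis surjD)
  let ?K = "{v. \<phi> v = 0}"
  let ?g = "\<lambda>(k,w). k + s w"
  have "bij_betw ?g (?K \<times> UNIV) UNIV"
    unfolding bij_betw_def inj_on_def
  proof (intro conjI ballI impI)
    fix p q assume p: "p \<in> ?K \<times> UNIV" and q: "q \<in> ?K \<times> UNIV" and e: "?g p = ?g q"
    obtain k w k' w' where pq: "p = (k,w)" "q = (k',w')" by fastforce
    from e have "\<phi> (k + s w) = \<phi> (k' + s w')" by (simp add: pq)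
    hence "w = w'" using p q by (simp add: pq add s)
    with e show "p = q" by (simp add: pq)
  next
    show "?g ` (?K \<times> UNIV) = UNIV"
    proof (intro set_eqI iffI)
      fix v :: 'a
      have "\<phi> (v - s (\<phi> v)) = 0" by (simp add: diff s)
      hence "(v - s (\<phi> v), \<phi> v) \<in> ?K \<times> UNIV" by simp
      moreover have "v = ?g (v - s (\<phi> v), \<phi> v)" by simp
      ultimately show "v \<in> ?g ` (?K \<times> UNIV)" by blast
    qed auto
  qed
  hence "CARD('a) = card (?K \<times> (UNIV :: 'b set))" by (metis bij_betw_same_card)
  thus ?thesis by (simp add: card_cartesian_product)
qed

lemma card_filter_sum: "finite S \<Longrightarrow> card {x\<in>S. P x} = (\<Sum>x\<in>S. if P x then 1 else 0)"
  by (simp add: sum.If_cases) (simp add: Int_def)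

lemma swap_count:
  fixes P :: "'a::finite \<Rightarrow> 'b \<Rightarrow> bool"
  assumes "finite S"
  shows "(\<Sum>A\<in>UNIV. card {x\<in>S. P A x}) = (\<Sum>x\<in>S. card {A. P A x})"
proof -
  have "(\<Sum>A\<in>UNIV. card {x\<in>S. P A x}) = (\<Sum>A\<in>UNIV. \<Sum>x\<in>S. if P A x then 1 else 0)"
    using assms by (simp add: card_filter_sum)
  also have "\<dots> = (\<Sum>x\<in>S. \<Sum>A\<in>UNIV. if P A x then 1 else 0)" by (rule sum.swap)
  also have "\<dots> = (\<Sum>x\<in>S. card {A. P A x})"
    using card_filter_sum[of "UNIV::'a set"] by simp
  finally show ?thesis .
qed

lemma card_distinct_pairs:
  assumes "finite S"
  shows "card {(x,y). x \<in> S \<and> y \<in> S \<and> x \<noteq> y} = card S * (card S - 1)"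
proof -
  have "{(x,y). x \<in> S \<and> y \<in> S \<and> x \<noteq> y} = Sigma S (\<lambda>x. S - {x})" by auto
  hence "card {(x,y). x \<in> S \<and> y \<in> S \<and> x \<noteq> y} = (\<Sum>x\<in>S. card (S - {x}))"
    using assms by simp
  also have "\<dots> = (\<Sum>x\<in>S. card S - 1)" using assms by (intro sum.cong) auto
  finally show ?thesis by simp
qed

definition dot :: "bit ^ 'n \<Rightarrow> bit ^ 'n \<Rightarrow> bit" where
  "dot u x = (\<Sum>c\<in>UNIV. u$c * x$c)"

lemma dot_axis: "dot (axis i 1) x = x $ i"
  by (simp add: dot_def axis_def if_distrib[of "\<lambda>u. u * x$_" for x] del: mult_bit_eq_and add_bit_eq_xor cong: if_cong)

lemma dot_add: "dot (e + f) x = dot e x + dot f x"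
  by (simp add: dot_def sum.distrib distrib_right del: mult_bit_eq_and add_bit_eq_xor)

lemma bit_add_self[simp]: "(a::bit) + a = 0"
  by (cases a) simp_all

lemma dual1: assumes "x \<noteq> (0::bit^'n)" shows "\<exists>e. dot e x = 1"
proof -
  obtain i where "x $ i \<noteq> 0" using assms by (metis vec_eq_iff zero_index)
  thus ?thesis by (metis dot_axis bit_not_zero_iff)
qed

lemma dual_half:
  assumes "x $ i = 1" "y $ i = 0" "y \<noteq> (0::bit^'n)"
  shows "\<exists>f. dot f x = 0 \<and> dot f y = 1"
proof -
  obtain j where j: "y $ j = 1" using assms(3) by (metis vec_eq_iff zero_index bit_not_zero_iff)
  show ?thesis
  proof (cases "x $ j = 0")
    case True thus ?thesis using j by (metis dot_axis)
  next
    case False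
    hence "x $ j = 1" by simp
    thus ?thesis using j assms by (intro exI[of _ "axis i 1 + axis j 1"]) (simp add: dot_add dot_axis)
  qed
qed

lemma dual2:
  assumes "x \<noteq> 0" "y \<noteq> 0" "x \<noteq> (y::bit^'n)"
  shows "\<exists>e f. dot e x = 1 \<and> dot e y = 0 \<and> dot f x = 0 \<and> dot f y = 1"
proof -
  obtain i where i: "x $ i \<noteq> y $ i" using assms(3) by (metis vec_eq_iff)
  show ?thesis
  proof (cases "x $ i = 1")
    case True
    hence "y $ i = 0" using i by simp
    with True assms obtain f where "dot f x = 0 \<and> dot f y = 1" using dual_half by blast
    thus ?thesis using True \<open>y $ i = 0\<close> by (metis dot_axis)
  next
    case False
    hence "x $ i = 0" "y $ i = 1" using i by auto
    with assms obtain e where "dot e y = 0 \<and> dot e x = 1" using dual_half by blast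
    thus ?thesis using \<open>x $ i = 0\<close> \<open>y $ i = 1\<close> by (metis dot_axis)
  qed
qed

lemma outer_mult:
  "(\<chi> r. \<chi> c. v$r * e$c + w$r * f$c) *v z = (\<chi> r. v$r * dot e z + w$r * dot f z)"
  by (simp add: vec_eq_iff matrix_vector_mult_def dot_def sum.distrib sum_distrib_left algebra_simps del: mult_bit_eq_and add_bit_eq_xor)


lemma neg_bitvec[simp]: "- (x::bit^'n) = x"
  by (simp add: vec_eq_iff)

lemma count1:
  assumes "x \<noteq> (0::bit^'n)"
  shows "CARD(bit^'n^'m) = CARD(bit^'m) * card {A::bit^'n^'m. A *v x = 0}"
proof (rule card_hom_surj)
  show "\<And>a b. (a + b) *v x = a *v x + b *v x" by (simp add: matrix_vector_mult_add_rdistrib)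
  obtain e where e: "dot e x = 1" using dual1[OF assms] by blast
  show "surj (\<lambda>A::bit^'n^'m. A *v x)"
  proof (rule surjI)
    fix v :: "bit^'m"
    show "(\<chi> r. \<chi> c. v$r * e$c + 0$r * 0$c) *v x = v"
      by (simp only: outer_mult e) (simp add: vec_eq_iff)
  qed
qed

lemma count2:
  assumes "x \<noteq> 0" "y \<noteq> 0" "x \<noteq> (y::bit^'n)"
  shows "CARD(bit^'n^'m) = CARD((bit^'m) \<times> (bit^'m)) * card {A::bit^'n^'m. A *v x = 0 \<and> A *v y = 0}"
proof -
  have "CARD(bit^'n^'m) = CARD((bit^'m) \<times> (bit^'m)) * card {A::bit^'n^'m. (A *v x, A *v y) = 0}"
  proof (rule card_hom_surj)
    show "\<And>a b. ((a + b) *v x, (a + b) *v y) = (a *v x, a *v y) + (b *v x, b *v y)"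
      by (simp add: matrix_vector_mult_add_rdistrib)
    obtain e f where ef: "dot e x = 1" "dot e y = 0" "dot f x = 0" "dot f y = 1"
      using dual2[OF assms] by blast
    show "surj (\<lambda>A::bit^'n^'m. (A *v x, A *v y))"
    proof (rule surjI)
      fix p :: "(bit^'m) \<times> (bit^'m)"
      show "((\<chi> r. \<chi> c. fst p$r * e$c + snd p$r * f$c) *v x, (\<chi> r. \<chi> c. fst p$r * e$c + snd p$r * f$c) *v y) = p"
        by (simp only: outer_mult ef) (simp add: vec_eq_iff prod_eq_iff)
    qed
  qed
  thus ?thesis by (simp add: zero_prod_def)
qed

lemma nullity_one:
  fixes A :: "bit^'n^'n"
  assumes "card {x. x \<noteq> 0 \<and> A *v x = 0} = 1"
  shows "nullity A = 1"
proof -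
  obtain x0 where K: "{x. x \<noteq> 0 \<and> A *v x = 0} = {x0}" using assms card_1_singletonE by blast
  hence x0: "x0 \<noteq> 0" "A *v x0 = 0" by auto
  have "null_space A = insert 0 {x. x \<noteq> 0 \<and> A *v x = 0}"
    unfolding null_space_def using matrix_vector_mult_0_right[of A] by blast
  hence "null_space A = {0, x0}" by (simp only: K)
  also have "\<dots> = vec.span {x0}"
  proof -
    have "vec.span {x0} = range (\<lambda>k. k *s x0)" by (rule vec.span_singleton)
    also have "\<dots> = {0, x0}"
    proof (intro set_eqI iffI)
      fix z assume "z \<in> range (\<lambda>k. k *s x0)"
      then obtain k :: bit where "z = k *s x0" by blast
      thus "z \<in> {0, x0}" by (cases k) auto
    next
      fix z assume "z \<in> {0, x0}"
      thus "z \<in> range (\<lambda>k. k *s x0)"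
        by (metis (no_types, lifting) empty_iff insert_iff rangeI vector_smult_lzero vector_smult_lid)
    qed
    finally show ?thesis by simp
  qed
  finally have "nullity A = vec.dim {x0}" unfolding nullity_def by simp
  also have "\<dots> = 1"
  proof -
    have "vec.independent {x0}" using x0 by (simp add: vec.independent_insert vec.span_empty)
    thus ?thesis by (simp add: vec.dim_eq_card_independent)
  qed
  finally show ?thesis .
qed



lemma two_distinct: assumes "CARD('n::finite) > 1" shows "\<exists>i j::'n. i \<noteq> j"
proof (rule ccontr)
  assume "\<not> (\<exists>i j::'n. i \<noteq> j)"
  hence "\<forall>a1\<in>(UNIV::'n set). \<forall>a2\<in>UNIV. a1 = a2" by blast
  hence "CARD('n) \<le> Suc 0" using card_le_Suc0_iff_eq[OF finite[of "UNIV::'n set"]] by blast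
  thus False using assms by linarith
qed

lemma m_ge3: assumes "CARD('n::finite) > 1" shows "3 \<le> CARD(bit^'n)"
proof -
  obtain i j :: 'n where ij: "i \<noteq> j" using two_distinct[OF assms] by blast
  have "card {0::bit^'n, axis i 1, axis j 1} = 3"
    using ij by (simp add: axis_eq_axis)
  moreover have "card {0::bit^'n, axis i 1, axis j 1} \<le> CARD(bit^'n)"
    by (rule card_mono) auto
  ultimately show ?thesis by linarith
qed

lemma sum_const_T:
  assumes "\<And>x. x \<in> S \<Longrightarrow> f x * (m::nat) = T"
  shows "(\<Sum>x\<in>S. f x) * m = card S * T"
proof -
  have "(\<Sum>x\<in>S. f x) * m = (\<Sum>x\<in>S. f x * m)" by (rule sum_distrib_right)
  also have "\<dots> = (\<Sum>x\<in>S. T)" using assms by (rule sum.cong[OF refl])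
  also have "\<dots> = card S * T" by simp
  finally show ?thesis .
qed

lemma final_arith:
  fixes sA sB M N T q :: nat
  assumes A: "sA * (q+3) = (q+2) * T" and B: "sB * ((q+3) * (q+3)) = (q+2) * (q+1) * T"
    and I: "2 * sA \<le> 2 * M + sB" and MN: "M \<le> N" and T: "T > 0"
  shows "T < 2 * N"
proof -
  have "2 * sA * ((q+3) * (q+3)) \<le> (2 * M + sB) * ((q+3) * (q+3))"
    using I by (rule mult_le_mono1)
  also have "\<dots> = 2 * M * ((q+3) * (q+3)) + sB * ((q+3) * (q+3))" by (rule add_mult_distrib)
  also have "\<dots> = 2 * M * ((q+3) * (q+3)) + (q + 2) * (q + 1) * T" by (simp only: B)
  finally have h0: "2 * sA * ((q+3) * (q+3)) \<le> 2 * M * ((q+3) * (q+3)) + (q + 2) * (q + 1) * T" .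
  have "2 * sA * ((q+3) * (q+3)) = 2 * (sA * (q+3)) * (q+3)" by (simp only: mult.assoc)
  also have "\<dots> = 2 * (q + 2) * (q + 3) * T" by (simp only: A mult.assoc mult.commute mult.left_commute)
  finally have h: "2 * (q + 2) * (q + 3) * T \<le> 2 * M * ((q+3) * (q+3)) + (q + 2) * (q + 1) * T"
    using h0 by simp
  have e3: "2 * (q + 2) * (q + 3) * T = (q + 2) * (q + 1) * T + (q+3) * (q+3) * T + (q + 1) * T"
    by (simp add: algebra_simps)
  have "(q + 1) * T > 0" using T by simp
  hence "T * ((q+3) * (q+3)) < (2 * M) * ((q+3) * (q+3))" using h e3 by (simp only: mult.commute mult.left_commute mult.assoc)
  hence "T < 2 * M" using mult_less_cancel2 by blast
  thus ?thesis using MN by linarith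
qed

theorem mainTheorem13:
  assumes "CARD('n::finite) > 1"
  shows "2 * card {A :: bit ^ 'n ^ 'n. nullity A = 1} > CARD(bit ^ 'n ^ 'n)"
proof -
  define T where "T = CARD(bit^'n^'n)"
  define m where "m = CARD(bit^'n)"
  define K where "K = (\<lambda>A::bit^'n^'n. {x. x \<noteq> 0 \<and> A *v x = 0})"
  define X0 where "X0 = {x::bit^'n. x \<noteq> 0}"
  define Y0 where "Y0 = {(x,y). x \<in> X0 \<and> y \<in> X0 \<and> x \<noteq> y}"
  define a where "a = (\<lambda>A. card (K A))"
  define b where "b = (\<lambda>A. card {(x,y). x \<in> K A \<and> y \<in> K A \<and> x \<noteq> y})"
  define M where "M = card {A. a A = 1}"
  define sumA where "sumA = (\<Sum>A\<in>(UNIV::(bit^'n^'n) set). a A)"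
  define sumB where "sumB = (\<Sum>A\<in>(UNIV::(bit^'n^'n) set). b A)"
  have "3 \<le> m" unfolding m_def by (rule m_ge3[OF assms])
  define q where "q = m - 3"
  have q: "m = q + 3" unfolding q_def using \<open>3 \<le> m\<close> by arith
  have Tpos: "T > 0" unfolding T_def by (rule finite_UNIV_card_ge_0) (rule finite)
  have finX0: "finite X0" by (rule finite)
  have cardX0: "card X0 = m - 1"
  proof -
    have "X0 = UNIV - {0}" unfolding X0_def by blast
    hence "card X0 = card (UNIV::(bit^'n) set) - 1" by (metis card_Diff_singleton UNIV_I)
    thus ?thesis unfolding m_def .
  qed
  have cardY0: "card Y0 = (q + 2) * (q + 1)"
  proof -
    have "card Y0 = card X0 * (card X0 - 1)" unfolding Y0_def by (rule card_distinct_pairs[OF finX0])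
    thus ?thesis using cardX0 q by simp
  qed
  have sumA_eq: "sumA = (\<Sum>x\<in>X0. card {A::bit^'n^'n. A *v x = 0})"
  proof -
    have "sumA = (\<Sum>A\<in>(UNIV::(bit^'n^'n) set). card {x\<in>X0. A *v x = 0})"
      unfolding sumA_def a_def
    proof (intro sum.cong refl arg_cong[where f=card])
      fix A :: "bit^'n^'n" show "K A = {x\<in>X0. A *v x = 0}" unfolding K_def X0_def by blast
    qed
    also have "\<dots> = (\<Sum>x\<in>X0. card {A::bit^'n^'n. A *v x = 0})"
      by (rule swap_count[OF finX0])
    finally show ?thesis .
  qed
  have sumA_m: "sumA * (q+3) = (q+2) * T"
  proof -
    have "sumA * m = card X0 * T" unfolding sumA_eq
    proof (rule sum_const_T)
      fix x assume "x \<in> X0"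
      hence x: "x \<noteq> 0" unfolding X0_def by blast
      have c: "CARD(bit^'n^'n) = CARD(bit^'n) * card {A::bit^'n^'n. A *v x = 0}"
        by (rule count1[OF x])
      show "card {A::bit^'n^'n. A *v x = 0} * m = T"
        unfolding T_def m_def using c by (metis mult.commute)
    qed
    thus ?thesis using cardX0 q by simp
  qed
  have finY0: "finite Y0" by (rule finite)
  have sumB_eq: "sumB = (\<Sum>p\<in>Y0. card {A::bit^'n^'n. A *v fst p = 0 \<and> A *v snd p = 0})"
  proof -
    have "sumB = (\<Sum>A\<in>(UNIV::(bit^'n^'n) set). card {p\<in>Y0. A *v fst p = 0 \<and> A *v snd p = 0})"
      unfolding sumB_def b_def
    proof (intro sum.cong refl arg_cong[where f=card])
      fix A :: "bit^'n^'n"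
      show "{(x,y). x \<in> K A \<and> y \<in> K A \<and> x \<noteq> y} = {p\<in>Y0. A *v fst p = 0 \<and> A *v snd p = 0}"
      proof (rule set_eqI)
        fix p :: "(bit^'n) \<times> (bit^'n)"
        obtain x y where p: "p = (x,y)" by (cases p)
        show "p \<in> {(x,y). x \<in> K A \<and> y \<in> K A \<and> x \<noteq> y} \<longleftrightarrow> p \<in> {p\<in>Y0. A *v fst p = 0 \<and> A *v snd p = 0}"
          unfolding p K_def Y0_def X0_def by (simp only: mem_Collect_eq case_prod_conv fst_conv snd_conv) blast
      qed
    qed
    also have "\<dots> = (\<Sum>p\<in>Y0. card {A::bit^'n^'n. A *v fst p = 0 \<and> A *v snd p = 0})"
      by (rule swap_count[OF finY0])
    finally show ?thesis .
  qed
  have sumB_m: "sumB * ((q+3) * (q+3)) = (q + 2) * (q + 1) * T"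
  proof -
    have "sumB * (m * m) = card Y0 * T" unfolding sumB_eq
    proof (rule sum_const_T)
      fix p assume "p \<in> Y0"
      then obtain x y where p: "p = (x,y)" "x \<noteq> 0" "y \<noteq> 0" "x \<noteq> y"
        unfolding Y0_def X0_def by blast
      have c: "CARD(bit^'n^'n) = CARD((bit^'n) \<times> (bit^'n)) * card {A::bit^'n^'n. A *v x = 0 \<and> A *v y = 0}"
        by (rule count2[OF p(2-4)])
      have c2: "CARD((bit^'n) \<times> (bit^'n)) = CARD(bit^'n) * CARD(bit^'n)"
        by (rule card_prod)
      show "card {A::bit^'n^'n. A *v fst p = 0 \<and> A *v snd p = 0} * (m * m) = T"
      proof -
        have "T = m * m * card {A::bit^'n^'n. A *v x = 0 \<and> A *v y = 0}"
          unfolding T_def m_def by (simp only: c c2)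
        thus ?thesis unfolding p fst_conv snd_conv by (simp only: mult.commute)
      qed
    qed
    thus ?thesis using cardY0 q by simp
  qed
  have point: "2 * a A \<le> 2 * (if a A = 1 then 1 else 0) + b A" for A
  proof -
    have fin: "finite (K A)" by (rule finite)
    have ba: "b A = a A * (a A - 1)"
      unfolding b_def a_def by (rule card_distinct_pairs[OF fin])
    have n2: "a A \<noteq> 2"
    proof
      assume "a A = 2"
      hence "card (K A) = 2" unfolding a_def .
      hence "\<exists>x y. K A = {x, y} \<and> x \<noteq> y" by (subst card_2_iff[symmetric])
      then obtain x y where xy: "K A = {x, y}" "x \<noteq> y" by blast
      have "x \<in> K A" "y \<in> K A" unfolding xy(1) by blast+
      hence "x \<noteq> 0 \<and> A *v x = 0" "y \<noteq> 0 \<and> A *v y = 0" unfolding K_def by (simp only: mem_Collect_eq)+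
      hence x: "x \<noteq> 0" "A *v x = 0" and y: "y \<noteq> 0" "A *v y = 0" by blast+
      have "x + y \<noteq> 0"
      proof
        assume "x + y = 0"
        hence "x = - y" by (simp only: eq_neg_iff_add_eq_0) 
        hence "x = y" by (simp only: neg_bitvec)
        thus False using xy(2) by blast
      qed
      moreover have "A *v (x + y) = 0" by (simp only: matrix_vector_right_distrib x(2) y(2) add_0)
      ultimately have "x + y \<in> K A" unfolding K_def by blast
      hence "x + y = x \<or> x + y = y" using xy(1) by blast
      moreover have "x + y \<noteq> x" using y(1) by (metis add_cancel_left_right)
      moreover have "x + y \<noteq> y" using x(1) by (metis add_cancel_right_left)
      ultimately show False by blast
    qed
    show ?thesis
    proof (cases "a A \<ge> 3")
      case True
      hence "a A * 2 \<le> a A * (a A - 1)" by (intro mult_le_mono2) arith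
      thus ?thesis using ba by linarith
    next
      case False
      with n2 have "a A = 0 \<or> a A = 1" by arith
      thus ?thesis using ba by auto
    qed
  qed
  have ineq: "2 * sumA \<le> 2 * M + sumB"
  proof -
    have "2 * sumA = (\<Sum>A\<in>UNIV. 2 * a A)" unfolding sumA_def by (rule sum_distrib_left)
    also have "\<dots> \<le> (\<Sum>A\<in>UNIV. 2 * (if a A = 1 then 1 else 0) + b A)"
      by (intro sum_mono point)
    also have "\<dots> = 2 * (\<Sum>A\<in>UNIV. (if a A = 1 then 1 else 0)) + sumB"
      unfolding sumB_def sum.distrib sum_distrib_left ..
    also have "(\<Sum>A\<in>UNIV. (if a A = 1 then 1 else 0)) = M"
      unfolding M_def using card_filter_sum[of "UNIV :: (bit^'n^'n) set" "\<lambda>A. a A = 1"] by simp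
    finally show ?thesis .
  qed
  have MN: "M \<le> card {A :: bit ^ 'n ^ 'n. nullity A = 1}"
    unfolding M_def a_def K_def by (rule card_mono[OF finite]) (use nullity_one in blast)
  show ?thesis unfolding T_def[symmetric]
    by (rule final_arith[OF sumA_m sumB_m ineq MN Tpos])
qed
end
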